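(* Let an extended spinor connection on $N$ be given, with spatial covariant differentiation $\nabla$. Let $P\in\{1,\dots,J\}$, let $\mathbf X$ be an extended vector field (components $X^j$) and $\mathbf Y$ an extended spin-tensorial field of type $(\alpha_P,\beta_P|\nu_P,\gamma_P|m_P,n_P)$. Define extended fields $\mathfrak N^+$ (type $(1,1|0,0|0,0)$), $\bar{\mathfrak N}^+$ (type $(0,0|1,1|0,0)$), $\mathbf N^+$ (type $(0,0|0,0|1,1)$) by $$(\mathfrak N^+)^k_i=-\sum_{j=0}^3\sum_{I,J}X^jY^I_J\frac{\partial\mathrm A^k_{j\,i}}{\partial S[P]^I_J},\quad (\bar{\mathfrak N}^+)^k_i=-\sum_{j}\sum_{I,J}X^jY^I_J\frac{\partial\bar{\mathrm A}^k_{j\,i}}{\partial S[P]^I_J},\quad (\mathbf N^+)^k_i=-\sum_{j}\sum_{I,J}X^jY^I_J\frac{\partial\Gamma^k_{j\,i}}{\partial S[P]^I_J},$$ and for $Q=1,\dots,J$ put $\mathbf U[Q]=-D(\mathfrak N^+,\bar{\mathfrak N}^+,\mathbf N^+)\mathbf S[Q]$, $\bar{\mathbf U}[Q]=-D(\mathfrak N^+,\bar{\mathfrak N}^+,\mathbf N^+)\tau(\mathbf S[Q])$. Then, as operators on extended spin-tensorial fields of every type, $$[\nabla_{\mathbf X},\vec\nabla_{\mathbf Y}[P]]=\vec\nabla_{\mathbf U}[P]+\sum_{Q=1}^J\vec\nabla_{\mathbf U[Q]}[Q]+\sum_{Q=1}^J\bar{\vec\nabla}_{\bar{\mathbf U}[Q]}[Q]-\nabla_{\mathbf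 V}+D(\mathfrak N^+,\bar{\mathfrak N}^+,\mathbf N^+),$$ where $\mathbf U=\nabla_{\mathbf X}\mathbf Y$ and $\mathbf V=\vec\nabla_{\mathbf Y}[P]\mathbf X$.
   Context: Setting. $M$ is a 4-dimensional oriented, time-polarized space-time manifold with metric of signature $(+,-,-,-)$, with a spinor bundle $SM$. An equipped local chart has coordinates $x^0,\dots,x^3$, a spinor frame $\Psi_1,\Psi_2$ and associated tangent frame $\Upsilon_i=\sum_k\Upsilon^k_i\partial/\partial x^k$ ($i=0,..,3$); $c^k_{ij}$ are defined by $[\Upsilon_i,\Upsilon_j]=\sum_kc^k_{ij}\Upsilon_k$. A spin-tensor of type $(\alpha,\beta|\nu,\gamma|m,n)$ has components $X^{i_1\dots i_\alpha\bar i_1\dots\bar i_\nu h_1\dots h_m}_{j_1\dots j_\beta\bar j_1\dots\bar j_\gamma k_1\dots k_n}$ (spinor indices in $\{1,2\}$, tensor indices in $\{0,..,3\}$). The semilinear map $\tau$ sends type $(\alpha,\beta|\nu,\gamma|m,n)$ to $(\nu,\gamma|\alpha,\beta|m,n)$ by $\tau(S)^{i_1\dots i_\nu\bar i_1\dots\bar i_\alpha h}_{j_1\dots j_\gamma\bar j_1\dots\bar j_\beta k}=\overline{S^{\bar i_1\dots\bar i_\alpha i_1\dots i_\nu h}_{\bar j_1\dots\bar j_\beta j_1\dots j_\gamma k}}$. Composite bundle. Fix types $(\alpha_P,\beta_P|\nu_P,\gamma_P|m_P,n_P)$, $P=1,\dots,J$; $N$ is the direct sum of the corresponding spin-tensor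 bundles, a point being $q=(p,\mathbf S[1],\dots,\mathbf S[J])$; local coordinates $x^0,..,x^3$ and the components of all $\mathbf S[P]$. An extended spin-tensorial field of a type assigns smoothly to each $q$ a spin-tensor of that type at $\pi(q)$; components are functions of $x$, the components of the $\mathbf S[P]$ and their conjugates. $\partial/\partial S[P]^I_J$ and $\partial/\partial\tau(S[P])^{I'}_{J'}$ are Wirtinger derivatives. $\mathbf S[Q]$ and $\tau(\mathbf S[Q])$ are themselves extended fields. Native multivariate differentiations. For $\mathbf Y$ of type $(\alpha_P,\beta_P|\nu_P,\gamma_P|m_P,n_P)$: $\vec\nabla_{\mathbf Y}[P]\mathbf Z=\sum_{I,J}Y^I_J\,\partial\mathbf Z/\partial S[P]^I_J$; for $\mathbf Y$ of type $(\nu_P,\gamma_P|\alpha_P,\beta_P|m_P,n_P)$: $\bar{\vec\nabla}_{\mathbf Y}[P]\mathbf Z=\sum_{I',J'}Y^{I'}_{J'}\,\partial\mathbf Z/\partial\tau(S[P])^{I'}_{J'}$ (componentwise in $\mathbf Z$). Algebraic action and degenerate differentiation. For $2\times2$ matrix functions $a,b$, $4\times4$ matrix function $g$, and $X$ of type $(\varepsilon,\eta|\sigma,\zeta|e,f)$, $L(a,b,g)X$ has components $\sum_{\mu\le\varepsilon}\sum_v a^{a_\mu}_vX^{\dots v\dots}-\sum_{\mu\le\eta}\sum_w a^w_{b_\mu}X_{\dots w\dots}+\sum_{\mu\le\sigma}\sum_v b^{\bar a_\mu}_vX^{\dots v\dots}-\sum_{\mu\le\zeta}\sum_w b^w_{\bar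 b_\mu}X_{\dots w\dots}+\sum_{\mu\le e}\sum_v g^{c_\mu}_vX^{\dots v\dots}-\sum_{\mu\le f}\sum_w g^w_{d_\mu}X_{\dots w\dots}$ (the $\mu$-th index of the respective group replaced by the summation index). For $\mathfrak S$ of type $(1,1|0,0|0,0)$, $\bar{\mathfrak S}$ of type $(0,0|1,1|0,0)$, $\mathbf S$ of type $(0,0|0,0|1,1)$: $D(\mathfrak S,\bar{\mathfrak S},\mathbf S)X:=L(\mathfrak S,\bar{\mathfrak S},\mathbf S)X$. Extended spinor connection and covariant differentiation. An extended spinor connection is given in each equipped chart by smooth functions (of $x$ and the $\mathbf S[P]$ components and conjugates) $\mathrm A^k_{j\,i}$, $\bar{\mathrm A}^k_{j\,i}$ ($k,i\in\{1,2\}$, $j\in\{0,..,3\}$) and $\Gamma^k_{j\,i}$ ($k,i,j\in\{0,..,3\}$), transforming between charts so that $\nabla$ below is chart-independent. With $L_j:=L(\mathrm A_j,\bar{\mathrm A}_j,\Gamma_j)$, $\mathrm A_j=(\mathrm A^k_{j\,i})_{k,i}$ etc.: $$\nabla_j\mathbf Z=\sum_k\Upsilon^k_j\frac{\partial\mathbf Z}{\partial x^k}-\sum_{P}\sum_{I,J}(L_j\mathbf S[P])^I_J\frac{\partial\mathbf Z}{\partial S[P]^I_J}-\sum_{P}\sum_{I',J'}(L_j\tau(\mathbf S[P]))^{I'}_{J'}\frac{\partial\mathbf Z}{\partial\tau(S[P])^{I'}_{J'}}+L_j\mathbf Z,$$ and $\nabla_{\mathbf X}\mathbf Z=\sum_jX^j\nabla_j\mathbf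 Z$ for an extended vector field $\mathbf X$ (type $(0,0|0,0|1,0)$). $[A,B]=AB-BA$. *)

theory Defs
  imports "HOL-Analysis.Analysis"
begin

text \<open>A type (alpha,beta|nu,gamma|m,n) is a 6-tuple of naturals, ordered as
 (upper unbarred spinor, lower unbarred spinor, upper barred spinor,
  lower barred spinor, upper tensor, lower tensor).\<close>
type_synonym sttype = "nat \<times> nat \<times> nat \<times> nat \<times> nat \<times> nat"

text \<open>A component index: six lists of indices in the same order.
 Spinor indices range over {1,2}, tensor indices over {0,..,3}.\<close>
type_synonym stidx = "nat list \<times> nat list \<times> nat list \<times> nat list \<times> nat list \<times> nat list"

definition sp_range :: "nat set" where "sp_range = {1,2}"
definition tn_range :: "nat set" where "tn_range = {0..3}"

fun idx :: "sttype \<Rightarrow> stidx set" where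
  "idx (\<alpha>, \<beta>, \<nu>, \<gamma>, m, n) =
     {(a, b, c, d, e, f). length a = \<alpha> \<and> set a \<subseteq> sp_range \<and>
                          length b = \<beta> \<and> set b \<subseteq> sp_range \<and>
                          length c = \<nu> \<and> set c \<subseteq> sp_range \<and>
                          length d = \<gamma> \<and> set d \<subseteq> sp_range \<and>
                          length e = m \<and> set e \<subseteq> tn_range \<and>
                          length f = n \<and> set f \<subseteq> tn_range}"

fun tauty :: "sttype \<Rightarrow> sttype" where
  "tauty (\<alpha>, \<beta>, \<nu>, \<gamma>, m, n) = (\<nu>, \<gamma>, \<alpha>, \<beta>, m, n)"

fun swapidx :: "stidx \<Rightarrow> stidx" where
  "swapidx (a, b, c, d, e, f) = (c, d, a, b, e, f)"

text \<open>Index of the component X^j of a vector (type (0,0|0,0|1,0)).\<close>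
definition vidx :: "nat \<Rightarrow> stidx" where
  "vidx j = ([], [], [], [], [j], [])"

definition tau_st :: "(stidx \<Rightarrow> complex) \<Rightarrow> stidx \<Rightarrow> complex" where
  "tau_st S I = cnj (S (swapidx I))"

type_synonym cmat = "nat \<Rightarrow> nat \<Rightarrow> complex"  \<comment> \<open>a k i = a^k_i\<close>

fun lop :: "cmat \<Rightarrow> cmat \<Rightarrow> cmat \<Rightarrow> (stidx \<Rightarrow> complex) \<Rightarrow> stidx \<Rightarrow> complex" where
  "lop a b g X (A, B, C, D, E, F) =
      (\<Sum>\<mu><length A. \<Sum>v\<in>sp_range. a (A!\<mu>) v * X (A[\<mu>:=v], B, C, D, E, F))
    - (\<Sum>\<mu><length B. \<Sum>w\<in>sp_range. a w (B!\<mu>) * X (A, B[\<mu>:=w], C, D, E, F))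
    + (\<Sum>\<mu><length C. \<Sum>v\<in>sp_range. b (C!\<mu>) v * X (A, B, C[\<mu>:=v], D, E, F))
    - (\<Sum>\<mu><length D. \<Sum>w\<in>sp_range. b w (D!\<mu>) * X (A, B, C, D[\<mu>:=w], E, F))
    + (\<Sum>\<mu><length E. \<Sum>v\<in>tn_range. g (E!\<mu>) v * X (A, B, C, D, E[\<mu>:=v], F))
    - (\<Sum>\<mu><length F. \<Sum>w\<in>tn_range. g w (F!\<mu>) * X (A, B, C, D, E, F[\<mu>:=w]))"

text \<open>A point of N over the chart: coordinates x in R^4 and the fibre coordinates,
 i.e. all components of S[1],...,S[J], collected in a complex vector indexed by a
 finite type 'c (in bijection with the set of pairs (P, I)).\<close>
type_synonym 'c pt = "(real ^ 4) \<times> (complex ^ 'c)"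

text \<open>An extended spin-tensorial field (in the chart): components as functions of the point.\<close>
type_synonym 'c field = "'c pt \<Rightarrow> stidx \<Rightarrow> complex"

fun dder :: "'a list \<Rightarrow> ('a::real_normed_vector \<Rightarrow> 'b::real_normed_vector) \<Rightarrow> 'a \<Rightarrow> 'b" where
  "dder [] f = f"
| "dder (v # vs) f = (\<lambda>x. frechet_derivative (dder vs f) (at x) v)"

definition smooth_on :: "'a set \<Rightarrow> ('a::real_normed_vector \<Rightarrow> 'b::real_normed_vector) \<Rightarrow> bool" where
  "smooth_on S f \<longleftrightarrow> (\<forall>vs. \<forall>x\<in>S. dder vs f differentiable (at x))"

definition dirD :: "('a::real_normed_vector \<Rightarrow> 'b::real_normed_vector) \<Rightarrow> 'a \<Rightarrow> 'a \<Rightarrow> 'b" where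
  "dirD f v p = frechet_derivative f (at p) v"

definition xdir :: "nat \<Rightarrow> ('c::finite) pt" where
  "xdir k = (axis (of_nat k :: 4) 1, 0)"

definition pdx :: "(('c::finite) pt \<Rightarrow> complex) \<Rightarrow> nat \<Rightarrow> 'c pt \<Rightarrow> complex" where
  "pdx f k p = dirD f (xdir k) p"

text \<open>Wirtinger derivatives with respect to the fibre coordinate z = w_c and its conjugate:
 d/dz = (d/da - i d/db)/2, d/dzbar = (d/da + i d/db)/2, where z = a + i b.\<close>
definition wirt :: "(('c::finite) pt \<Rightarrow> complex) \<Rightarrow> 'c \<Rightarrow> 'c pt \<Rightarrow> complex" where
  "wirt f c p = (dirD f (0, axis c 1) p - \<i> * dirD f (0, axis c \<i>) p) / 2"

definition wirtb :: "(('c::finite) pt \<Rightarrow> complex) \<Rightarrow> 'c \<Rightarrow> 'c pt \<Rightarrow> complex" where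
  "wirtb f c p = (dirD f (0, axis c 1) p + \<i> * dirD f (0, axis c \<i>) p) / 2"

text \<open>The fields S[Q] and tau(S[Q]); crd Q I is the fibre coordinate carrying S[Q]^I.\<close>
definition Sfield :: "(nat \<Rightarrow> stidx \<Rightarrow> 'c::finite) \<Rightarrow> nat \<Rightarrow> 'c field" where
  "Sfield crd Q p I = snd p $ crd Q I"

definition tauF :: "'c field \<Rightarrow> 'c field" where
  "tauF Z p = tau_st (Z p)"

definition Lf :: "('c pt \<Rightarrow> cmat) \<Rightarrow> ('c pt \<Rightarrow> cmat) \<Rightarrow> ('c pt \<Rightarrow> cmat) \<Rightarrow> 'c field \<Rightarrow> 'c field" where
  "Lf a b g Z p = lop (a p) (b p) (g p) (Z p)"

text \<open>Native multivariate differentiations (componentwise in Z).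
 nvec crd ty P Y Z = sum over I in idx(ty P) of Y^I dZ/dS[P]^I;
 nbar crd ty P Y Z = sum over I' in idx(tau(ty P)) of Y^I' dZ/d tau(S[P])^I',
 where tau(S[P])^I' = conj(S[P]^{swap I'}).\<close>
definition nvec :: "(nat \<Rightarrow> stidx \<Rightarrow> 'c::finite) \<Rightarrow> (nat \<Rightarrow> sttype) \<Rightarrow> nat \<Rightarrow> 'c field \<Rightarrow> 'c field \<Rightarrow> 'c field" where
  "nvec crd ty P Y Z p I = (\<Sum>I'\<in>idx (ty P). Y p I' * wirt (\<lambda>q. Z q I) (crd P I') p)"

definition nbar :: "(nat \<Rightarrow> stidx \<Rightarrow> 'c::finite) \<Rightarrow> (nat \<Rightarrow> sttype) \<Rightarrow> nat \<Rightarrow> 'c field \<Rightarrow> 'c field \<Rightarrow> 'c field" where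
  "nbar crd ty P Y Z p I =
     (\<Sum>I'\<in>idx (tauty (ty P)). Y p I' * wirtb (\<lambda>q. Z q I) (crd P (swapidx I')) p)"

text \<open>Ups k j x = Upsilon^k_j(x); cA j p k i = A^k_{j i}(p); cAb j p k i = bar A^k_{j i}(p);
 cG j p k i = Gamma^k_{j i}(p).\<close>
definition nabla_j ::
  "nat \<Rightarrow> (nat \<Rightarrow> sttype) \<Rightarrow> (nat \<Rightarrow> stidx \<Rightarrow> 'c::finite) \<Rightarrow> (nat \<Rightarrow> nat \<Rightarrow> real ^ 4 \<Rightarrow> real)
   \<Rightarrow> (nat \<Rightarrow> 'c pt \<Rightarrow> cmat) \<Rightarrow> (nat \<Rightarrow> 'c pt \<Rightarrow> cmat) \<Rightarrow> (nat \<Rightarrow> 'c pt \<Rightarrow> cmat)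
   \<Rightarrow> nat \<Rightarrow> 'c field \<Rightarrow> 'c field" where
  "nabla_j J ty crd Ups cA cAb cG j Z p I =
      (\<Sum>k\<in>tn_range. complex_of_real (Ups k j (fst p)) * pdx (\<lambda>q. Z q I) k p)
    - (\<Sum>Q\<in>{1..J}. \<Sum>I'\<in>idx (ty Q).
          Lf (cA j) (cAb j) (cG j) (Sfield crd Q) p I' * wirt (\<lambda>q. Z q I) (crd Q I') p)
    - (\<Sum>Q\<in>{1..J}. \<Sum>I'\<in>idx (tauty (ty Q)).
          Lf (cA j) (cAb j) (cG j) (tauF (Sfield crd Q)) p I'
            * wirtb (\<lambda>q. Z q I) (crd Q (swapidx I')) p)
    + Lf (cA j) (cAb j) (cG j) Z p I"

definition nablaX ::
  "nat \<Rightarrow> (nat \<Rightarrow> sttype) \<Rightarrow> (nat \<Rightarrow> stidx \<Rightarrow> 'c::finite) \<Rightarrow> (nat \<Rightarrow> nat \<Rightarrow> real ^ 4 \<Rightarrow> real)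
   \<Rightarrow> (nat \<Rightarrow> 'c pt \<Rightarrow> cmat) \<Rightarrow> (nat \<Rightarrow> 'c pt \<Rightarrow> cmat) \<Rightarrow> (nat \<Rightarrow> 'c pt \<Rightarrow> cmat)
   \<Rightarrow> 'c field \<Rightarrow> 'c field \<Rightarrow> 'c field" where
  "nablaX J ty crd Ups cA cAb cG X Z p I =
     (\<Sum>j\<in>tn_range. X p (vidx j) * nabla_j J ty crd Ups cA cAb cG j Z p I)"

definition smooth_field :: "('c::finite) pt set \<Rightarrow> sttype \<Rightarrow> 'c field \<Rightarrow> bool" where
  "smooth_field W t Z \<longleftrightarrow> (\<forall>I\<in>idx t. smooth_on W (\<lambda>q. Z q I))"

end

theory Submission
  imports Defs
begin

lemma sym_est:
  fixes F :: "'a::real_normed_vector \<Rightarrow> 'b::real_normed_vector"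
  assumes W: "open W" "p \<in> W" and dF: "\<And>x. x \<in> W \<Longrightarrow> F differentiable (at x)"
   and dv: "(\<lambda>x. frechet_derivative F (at x) v) differentiable (at p)"
   and e: "e > 0"
  shows "\<exists>d>0. \<forall>h. 0 < h \<and> h < d \<longrightarrow>
     norm ((F (p + h *\<^sub>R v + h *\<^sub>R w) - F (p + h *\<^sub>R v) - F (p + h *\<^sub>R w) + F p)
        - (h*h) *\<^sub>R frechet_derivative (\<lambda>x. frechet_derivative F (at x) v) (at p) w) \<le> e * (h*h)"
proof -
  define Dv where "Dv = (\<lambda>x. frechet_derivative F (at x) v)"
  define Lv where "Lv = frechet_derivative Dv (at p)"
  define a where "a = Lv w"
  have hLv: "(Dv has_derivative Lv) (at p)" using dv unfolding Dv_def Lv_def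
    by (simp add: frechet_derivative_works)
  then have blLv: "bounded_linear Lv" by (rule has_derivative_bounded_linear)
  define K where "K = 2 * norm v + norm w + 1"
  have K: "K > 0" unfolding K_def by (smt (verit) norm_ge_zero)
  obtain d1 where d1: "d1 > 0" "\<And>y. norm (y - p) < d1 \<Longrightarrow> norm (Dv y - Dv p - Lv (y - p)) \<le> (e/K) * norm (y - p)"
    using hLv e K unfolding has_derivative_at_alt by (meson divide_pos_pos)
  obtain r where r: "r > 0" "ball p r \<subseteq> W" using W openE by blast
  define d where "d = min d1 r / (norm v + norm w + 1)"
  have dpos: "d > 0" unfolding d_def using d1 r by (smt (verit) divide_pos_pos norm_ge_zero)
  show ?thesis
  proof (intro exI[of _ d] conjI allI impI dpos)
    fix h :: real assume h: "0 < h \<and> h < d"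
    have hs: "h * (norm v + norm w) < min d1 r"
    proof -
      have "h * (norm v + norm w) \<le> h * (norm v + norm w + 1)" using h by simp
      also have "\<dots> < d * (norm v + norm w + 1)"
        using h by (intro mult_strict_right_mono) (auto intro: add_nonneg_pos)
      also have "\<dots> = min d1 r"
      proof -
        have nz: "norm v + norm w + 1 \<noteq> 0" using norm_ge_zero[of v] norm_ge_zero[of w] by linarith
        then show ?thesis unfolding d_def by (simp add: field_simps)
      qed
      finally show ?thesis .
    qed
    have near: "norm (t *\<^sub>R v + s *\<^sub>R w) < min d1 r" if "0 \<le> t" "t \<le> h" "0 \<le> s" "s \<le> h" for t s
    proof -
      have "norm (t *\<^sub>R v + s *\<^sub>R w) \<le> t * norm v + s * norm w"
        using that by (smt (verit) norm_scaleR norm_triangle_ineq abs_of_nonneg)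
      also have "\<dots> \<le> h * (norm v + norm w)" using that
        by (simp add: distrib_left add_mono mult_right_mono)
      finally show ?thesis using hs by linarith
    qed
    have inW: "p + (t *\<^sub>R v + s *\<^sub>R w) \<in> W" if "0 \<le> t" "t \<le> h" "0 \<le> s" "s \<le> h" for t s
    proof -
      have "dist p (p + (t *\<^sub>R v + s *\<^sub>R w)) < r" 
      proof -
        have "dist p (p + (t *\<^sub>R v + s *\<^sub>R w)) = norm (t *\<^sub>R v + s *\<^sub>R w)"
          by (metis add_diff_cancel_left' dist_commute dist_norm)
        then show ?thesis using near[OF that] by simp
      qed
      then show ?thesis using r(2) by auto
    qed
    define g where "g = (\<lambda>t::real. F (p + (t *\<^sub>R v + h *\<^sub>R w)) - F (p + (t *\<^sub>R v + 0 *\<^sub>R w)) - (t*h) *\<^sub>R a)"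
    define g' where "g' = (\<lambda>t::real. Dv (p + (t *\<^sub>R v + h *\<^sub>R w)) - Dv (p + (t *\<^sub>R v + 0 *\<^sub>R w)) - h *\<^sub>R a)"
    have lineder: "((\<lambda>t. F (p + (t *\<^sub>R v + s *\<^sub>R w))) has_vector_derivative Dv (p + (t *\<^sub>R v + s *\<^sub>R w))) (at t)"
      if "p + (t *\<^sub>R v + s *\<^sub>R w) \<in> W" for t s
    proof -
      have fd: "(F has_derivative frechet_derivative F (at (p + (t *\<^sub>R v + s *\<^sub>R w)))) (at (p + (t *\<^sub>R v + s *\<^sub>R w)))"
        using dF[OF that] by (simp add: frechet_derivative_works)
      have ld: "((\<lambda>t. p + (t *\<^sub>R v + s *\<^sub>R w)) has_derivative (\<lambda>u. u *\<^sub>R v)) (at t)"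
        by (auto intro!: derivative_eq_intros)
      have "((\<lambda>t. F (p + (t *\<^sub>R v + s *\<^sub>R w))) has_derivative
             (\<lambda>u. frechet_derivative F (at (p + (t *\<^sub>R v + s *\<^sub>R w))) (u *\<^sub>R v))) (at t)"
        using diff_chain_at[OF ld fd] by (simp add: o_def)
      moreover have "linear (frechet_derivative F (at (p + (t *\<^sub>R v + s *\<^sub>R w))))"
        using fd has_derivative_linear by blast
      ultimately show ?thesis unfolding has_vector_derivative_def Dv_def
        by (simp add: linear_scale)
    qed
    have gder: "(g has_vector_derivative g' t) (at t)" if "0 \<le> t" "t \<le> h" for t
    proof -
      have "((\<lambda>t. (t*h) *\<^sub>R a) has_vector_derivative h *\<^sub>R a) (at t)"
        by (auto intro!: derivative_eq_intros simp: has_vector_derivative_def)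
      then show ?thesis unfolding g_def g'_def
        using that h by (intro has_vector_derivative_diff lineder inW) auto
    qed
    have gcont: "continuous_on {0..h} g"
      using gder by (meson atLeastAtMost_iff continuous_at_imp_continuous_on has_vector_derivative_continuous)
    have gbnd: "norm (g' t) \<le> e * h" if "0 \<le> t" "t \<le> h" for t
    proof -
      define y1 where "y1 = t *\<^sub>R v + h *\<^sub>R w"
      define y2 where "y2 = t *\<^sub>R v + 0 *\<^sub>R w"
      have n1: "norm y1 < d1" "norm y2 < d1" using near[of t h] near[of t 0] that h unfolding y1_def y2_def by auto
      have b1: "norm (Dv (p + y1) - Dv p - Lv y1) \<le> (e/K) * norm y1" using d1(2)[of "p + y1"] n1 by simp
      have b2: "norm (Dv (p + y2) - Dv p - Lv y2) \<le> (e/K) * norm y2" using d1(2)[of "p + y2"] n1 by simp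
      have lin: "Lv y1 - Lv y2 = h *\<^sub>R a" unfolding y1_def y2_def a_def
        using bounded_linear.linear[OF blLv] by (simp add: linear_add linear_scale)
      have "g' t = (Dv (p + y1) - Dv p - Lv y1) - (Dv (p + y2) - Dv p - Lv y2) + (Lv y1 - Lv y2 - h *\<^sub>R a)"
        unfolding g'_def y1_def y2_def by (simp add: algebra_simps)
      then have "norm (g' t) \<le> (e/K) * norm y1 + (e/K) * norm y2"
        using lin b1 b2 by (smt (verit) norm_triangle_ineq4 diff_self norm_zero add.right_neutral)
      also have "\<dots> \<le> (e/K) * (h * norm v + h * norm w) + (e/K) * (h * norm v)"
      proof -
        have "norm y1 \<le> h * norm v + h * norm w" unfolding y1_def using that h
          by (smt (verit) norm_scaleR norm_triangle_ineq abs_of_nonneg mult_right_mono norm_ge_zero)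
        moreover have "norm y2 \<le> h * norm v" unfolding y2_def using that h
          by (simp add: mult_right_mono)
        ultimately show ?thesis using e K
          by (intro add_mono mult_left_mono) auto
      qed
      also have "\<dots> = (e/K) * h * (2 * norm v + norm w)" by (simp add: algebra_simps)
      also have "\<dots> \<le> (e/K) * h * K" unfolding K_def using e K h
        by (intro mult_left_mono) auto
      also have "\<dots> = e * h" using K by simp
      finally show ?thesis .
    qed
    have phid: "((\<lambda>t. e * h * t) has_vector_derivative e * h) (at t)" for t
      by (auto intro!: derivative_eq_intros simp: has_vector_derivative_def)
    have "norm (g h - g 0) \<le> e * h * h - e * h * 0"
      apply (rule differentiable_bound_general[where f' = g' and \<phi>' = "\<lambda>_. e * h" and \<phi> = "\<lambda>t. e * h * t"])
      using h gcont gder gbnd phid by (auto intro!: continuous_intros)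
    moreover have "g h - g 0 = (F (p + h *\<^sub>R v + h *\<^sub>R w) - F (p + h *\<^sub>R v) - F (p + h *\<^sub>R w) + F p) - (h*h) *\<^sub>R a"
      unfolding g_def by (simp add: algebra_simps)
    ultimately show "norm ((F (p + h *\<^sub>R v + h *\<^sub>R w) - F (p + h *\<^sub>R v) - F (p + h *\<^sub>R w) + F p)
        - (h*h) *\<^sub>R frechet_derivative (\<lambda>x. frechet_derivative F (at x) v) (at p) w) \<le> e * (h*h)"
      unfolding a_def Lv_def Dv_def by (simp add: mult.assoc)
  qed
qed

lemma sym2:
  fixes F :: "'a::real_normed_vector \<Rightarrow> 'b::real_normed_vector"
  assumes W: "open W" "p \<in> W" and dF: "\<And>x. x \<in> W \<Longrightarrow> F differentiable (at x)"
   and dv: "(\<lambda>x. frechet_derivative F (at x) v) differentiable (at p)"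
   and dw: "(\<lambda>x. frechet_derivative F (at x) w) differentiable (at p)"
  shows "frechet_derivative (\<lambda>x. frechet_derivative F (at x) v) (at p) w
       = frechet_derivative (\<lambda>x. frechet_derivative F (at x) w) (at p) v"
proof -
  define a where "a = frechet_derivative (\<lambda>x. frechet_derivative F (at x) v) (at p) w"
  define b where "b = frechet_derivative (\<lambda>x. frechet_derivative F (at x) w) (at p) v"
  have "norm (a - b) \<le> 0 + e" if e: "e > 0" for e
  proof -
    obtain d1 where d1: "d1 > 0" "\<And>h. 0 < h \<and> h < d1 \<Longrightarrow>
       norm ((F (p + h *\<^sub>R v + h *\<^sub>R w) - F (p + h *\<^sub>R v) - F (p + h *\<^sub>R w) + F p) - (h*h) *\<^sub>R a) \<le> (e/2) * (h*h)"
      using sym_est[OF W dF dv, of "e/2" w] e unfolding a_def by auto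
    obtain d2 where d2: "d2 > 0" "\<And>h. 0 < h \<and> h < d2 \<Longrightarrow>
       norm ((F (p + h *\<^sub>R w + h *\<^sub>R v) - F (p + h *\<^sub>R w) - F (p + h *\<^sub>R v) + F p) - (h*h) *\<^sub>R b) \<le> (e/2) * (h*h)"
      using sym_est[OF W dF dw, of "e/2" v] e unfolding b_def by auto
    define h where "h = min d1 d2 / 2"
    have h: "0 < h" "h < d1" "h < d2" unfolding h_def using d1 d2 by auto
    define \<Delta> where "\<Delta> = F (p + h *\<^sub>R v + h *\<^sub>R w) - F (p + h *\<^sub>R v) - F (p + h *\<^sub>R w) + F p"
    have 1: "norm (\<Delta> - (h*h) *\<^sub>R a) \<le> (e/2) * (h*h)" using d1(2)[of h] h unfolding \<Delta>_def by auto
    have "norm (\<Delta> - (h*h) *\<^sub>R b) \<le> (e/2) * (h*h)" using d2(2)[of h] h unfolding \<Delta>_def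
      by (simp add: algebra_simps)
    then have "norm ((h*h) *\<^sub>R a - (h*h) *\<^sub>R b) \<le> e * (h*h)"
      using 1 norm_triangle_ineq4[of "\<Delta> - (h*h) *\<^sub>R b" "\<Delta> - (h*h) *\<^sub>R a"]
      by (simp add: norm_minus_commute)
    then have "(h*h) * norm (a - b) \<le> e * (h*h)"
      using h by (simp add: scaleR_diff_right[symmetric])
    then show ?thesis using h by simp
  qed
  then have "norm (a - b) \<le> 0" by (rule field_le_epsilon)
  then show ?thesis unfolding a_def b_def by simp
qed

definition isder :: "(('a::real_normed_vector \<Rightarrow> complex) \<Rightarrow> complex) \<Rightarrow> 'a \<Rightarrow> bool" where
 "isder \<delta> p \<longleftrightarrow> (\<forall>f g. f differentiable (at p) \<longrightarrow> g differentiable (at p) \<longrightarrow>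
      \<delta> (\<lambda>q. f q + g q) = \<delta> f + \<delta> g \<and> \<delta> (\<lambda>q. f q * g q) = \<delta> f * g p + f p * \<delta> g) \<and> (\<forall>c. \<delta> (\<lambda>q. c) = 0)"

lemma der_add: "isder \<delta> p \<Longrightarrow> f differentiable (at p) \<Longrightarrow> g differentiable (at p) \<Longrightarrow>
   \<delta> (\<lambda>q. f q + g q) = \<delta> f + \<delta> g"
  unfolding isder_def by blast

lemma der_mult: "isder \<delta> p \<Longrightarrow> f differentiable (at p) \<Longrightarrow> g differentiable (at p) \<Longrightarrow>
   \<delta> (\<lambda>q. f q * g q) = \<delta> f * g p + f p * \<delta> g"
  unfolding isder_def by blast

lemma der_const: "isder \<delta> p \<Longrightarrow> \<delta> (\<lambda>q. c) = 0"
  unfolding isder_def by blast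

lemma der_cmult: "isder \<delta> p \<Longrightarrow> f differentiable (at p) \<Longrightarrow> \<delta> (\<lambda>q. c * f q) = c * \<delta> f"
  using der_mult[of \<delta> p "\<lambda>q. c" f] der_const[of \<delta> p c] by simp

lemma der_neg: "isder \<delta> p \<Longrightarrow> f differentiable (at p) \<Longrightarrow> \<delta> (\<lambda>q. - f q) = - \<delta> f"
  using der_cmult[of \<delta> p f "-1"] by simp

lemma der_diff: "isder \<delta> p \<Longrightarrow> f differentiable (at p) \<Longrightarrow> g differentiable (at p) \<Longrightarrow>
   \<delta> (\<lambda>q. f q - g q) = \<delta> f - \<delta> g"
  using der_add[of \<delta> p f "\<lambda>q. - g q"] der_neg[of \<delta> p g] by simp

lemma der_sum: assumes "isder \<delta> p" "\<And>x. x \<in> S \<Longrightarrow> f x differentiable (at p)"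
  shows "\<delta> (\<lambda>q. \<Sum>x\<in>S. f x q) = (\<Sum>x\<in>S. \<delta> (f x))"
proof (cases "finite S")
  case True
  then show ?thesis using assms(2)
  proof (induction S rule: finite_induct)
    case empty
    then show ?case using der_const[OF assms(1)] by simp
  next
    case (insert x F)
    have "\<delta> (\<lambda>q. \<Sum>x\<in>insert x F. f x q) = \<delta> (\<lambda>q. f x q + (\<Sum>x\<in>F. f x q))"
      using insert by simp
    also have "\<dots> = \<delta> (f x) + \<delta> (\<lambda>q. \<Sum>x\<in>F. f x q)"
      using insert by (intro der_add[OF assms(1)]) (auto intro!: differentiable_sum)
    finally show ?case using insert by simp
  qed
next
  case False
  then show ?thesis using der_const[OF assms(1)] by simp
qed

lemma isder_dirD: "isder (\<lambda>f. dirD f w p) p"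
  unfolding isder_def
proof (intro conjI allI impI)
  fix f g :: "'a \<Rightarrow> complex" assume f: "f differentiable (at p)" and g: "g differentiable (at p)"
  have hf: "(f has_derivative frechet_derivative f (at p)) (at p)" using f frechet_derivative_works by blast
  have hg: "(g has_derivative frechet_derivative g (at p)) (at p)" using g frechet_derivative_works by blast
  show "dirD (\<lambda>q. f q + g q) w p = dirD f w p + dirD g w p"
    using frechet_derivative_at[OF has_derivative_add[OF hf hg]] unfolding dirD_def
    by (metis)
  show "dirD (\<lambda>q. f q * g q) w p = dirD f w p * g p + f p * dirD g w p"
    using frechet_derivative_at[OF has_derivative_mult[OF hf hg]] unfolding dirD_def
    by (metis add.commute)
next
  fix c :: complex
  show "dirD (\<lambda>q. c) w p = 0"
    using frechet_derivative_at[OF has_derivative_const[of c "at p"]] unfolding dirD_def by metis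
qed

lemma isder_lin2: "isder \<delta>1 p \<Longrightarrow> isder \<delta>2 p \<Longrightarrow> isder (\<lambda>f. a * \<delta>1 f + b * \<delta>2 f) p"
  unfolding isder_def by (auto simp: algebra_simps)

lemma isder_add: "isder \<delta>1 p \<Longrightarrow> isder \<delta>2 p \<Longrightarrow> isder (\<lambda>f. \<delta>1 f + \<delta>2 f) p"
  unfolding isder_def by (auto simp: algebra_simps)

lemma isder_diff: "isder \<delta>1 p \<Longrightarrow> isder \<delta>2 p \<Longrightarrow> isder (\<lambda>f. \<delta>1 f - \<delta>2 f) p"
  unfolding isder_def by (auto simp: algebra_simps)

lemma isder_scale: "isder \<delta> p \<Longrightarrow> isder (\<lambda>f. c * \<delta> f) p"
  unfolding isder_def by (auto simp: algebra_simps)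

lemma isder_zero: "isder (\<lambda>f. 0) p"
  unfolding isder_def by auto

lemma isder_sum: "(\<And>x. x \<in> S \<Longrightarrow> isder (\<delta> x) p) \<Longrightarrow> isder (\<lambda>f. \<Sum>x\<in>S. \<delta> x f) p"
proof (induction S rule: infinite_finite_induct)
  case (infinite A)
  then show ?case by (simp add: isder_zero)
next
  case empty
  then show ?case by (simp add: isder_zero)
next
  case (insert x F)
  then show ?case by (simp add: isder_add)
qed

lemma wirt_eq: "wirt f c p = (1/2) * dirD f (0, axis c 1) p + (-\<i>/2) * dirD f (0, axis c \<i>) p"
  unfolding wirt_def by (simp add: field_simps)
lemma wirtb_eq: "wirtb f c p = (1/2) * dirD f (0, axis c 1) p + (\<i>/2) * dirD f (0, axis c \<i>) p"
  unfolding wirtb_def by (simp add: field_simps)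

lemma isder_wirt: "isder (\<lambda>f. wirt f c p) p"
  unfolding wirt_eq by (intro isder_lin2 isder_dirD)
lemma isder_wirtb: "isder (\<lambda>f. wirtb f c p) p"
  unfolding wirtb_eq by (intro isder_lin2 isder_dirD)
lemma isder_pdx: "isder (\<lambda>f. pdx f k p) p"
  unfolding pdx_def by (rule isder_dirD)

lemma fin_sp[simp]: "finite sp_range" by (simp add: sp_range_def)
lemma fin_tn[simp]: "finite tn_range" by (simp add: tn_range_def)

lemma set_upd_sub[simp]: "set A \<subseteq> S \<Longrightarrow> v \<in> S \<Longrightarrow> set (A[\<mu>:=v]) \<subseteq> S"
  by (meson dual_order.trans insert_subset set_update_subset_insert)

lemma lop_cong:
  assumes "I \<in> idx t" "\<And>I'. I' \<in> idx t \<Longrightarrow> Z1 I' = Z2 I'"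
  shows "lop a b g Z1 I = lop a b g Z2 I"
proof -
  obtain al be nu ga m n where t: "t = (al,be,nu,ga,m,n)" by (cases t) auto
  obtain A B C D E F where I: "I = (A,B,C,D,E,F)" by (cases I) auto
  show ?thesis using assms unfolding t I
    by (simp only: lop.simps) (intro arg_cong2[where f="(+)"] arg_cong2[where f="(-)"] sum.cong refl arg_cong2[where f="(*)"]; auto)
qed

lemma lop_Zadd: "lop a b g (\<lambda>I. Z1 I + Z2 I) I = lop a b g Z1 I + lop a b g Z2 I"
  by (cases I) (simp add: sum.distrib algebra_simps)

lemma lop_Zscale: "lop a b g (\<lambda>I. c * Z I) I = c * lop a b g Z I"
  by (cases I) (simp add: sum_distrib_left algebra_simps)

lemma lop_Zzero: "lop a b g (\<lambda>I. 0) I = 0"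
  by (cases I) simp

lemma lop_Zsum: "lop a b g (\<lambda>I'. \<Sum>x\<in>S. F x I') I = (\<Sum>x\<in>S. lop a b g (F x) I)"
proof (induction S rule: infinite_finite_induct)
  case (infinite A) then show ?case by (simp add: lop_Zzero)
next
  case empty then show ?case by (simp add: lop_Zzero)
next
  case (insert x F) then show ?case by (simp add: lop_Zadd)
qed

lemma lop_Tadd: "lop (\<lambda>k i. a1 k i + a2 k i) (\<lambda>k i. b1 k i + b2 k i) (\<lambda>k i. g1 k i + g2 k i) Z I
   = lop a1 b1 g1 Z I + lop a2 b2 g2 Z I"
  by (cases I) (simp add: sum.distrib algebra_simps)

lemma lop_Tscale: "lop (\<lambda>k i. c * a k i) (\<lambda>k i. c * b k i) (\<lambda>k i. c * g k i) Z I = c * lop a b g Z I"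
  by (cases I) (simp add: sum_distrib_left algebra_simps)

lemma lop_Tzero: "lop (\<lambda>k i. 0) (\<lambda>k i. 0) (\<lambda>k i. 0) Z I = 0"
  by (cases I) simp

lemma lop_Tneg: "lop (\<lambda>k i. - a k i) (\<lambda>k i. - b k i) (\<lambda>k i. - g k i) Z I = - lop a b g Z I"
  using lop_Tscale[of "-1" a b g Z I] by simp

lemma lop_Tsum: "lop (\<lambda>k i. \<Sum>x\<in>S. a x k i) (\<lambda>k i. \<Sum>x\<in>S. b x k i) (\<lambda>k i. \<Sum>x\<in>S. g x k i) Z I
   = (\<Sum>x\<in>S. lop (a x) (b x) (g x) Z I)"
proof (induction S rule: infinite_finite_induct)
  case (infinite A) then show ?case using lop_Tzero by simp
next
  case empty then show ?case using lop_Tzero by simp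
next
  case (insert x F) then show ?case by (simp add: lop_Tadd)
qed

lemma lop_der:
  assumes d: "isder \<delta> p" and I: "I \<in> idx t"
    and da: "\<And>k i. (\<lambda>q. a q k i) differentiable (at p)"
    and db: "\<And>k i. (\<lambda>q. b q k i) differentiable (at p)"
    and dg: "\<And>k i. (\<lambda>q. g q k i) differentiable (at p)"
    and dZ: "\<And>I'. I' \<in> idx t \<Longrightarrow> (\<lambda>q. Z q I') differentiable (at p)"
  shows "\<delta> (\<lambda>q. lop (a q) (b q) (g q) (Z q) I)
     = lop (\<lambda>k i. \<delta> (\<lambda>q. a q k i)) (\<lambda>k i. \<delta> (\<lambda>q. b q k i)) (\<lambda>k i. \<delta> (\<lambda>q. g q k i)) (Z p) I
       + lop (a p) (b p) (g p) (\<lambda>I'. \<delta> (\<lambda>q. Z q I')) I"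
proof -
  obtain al be nu ga m n where t: "t = (al,be,nu,ga,m,n)" by (cases t) auto
  obtain A B C D E F where Ie: "I = (A,B,C,D,E,F)" by (cases I) auto
  note dZ' = dZ[unfolded t, simplified]
  show ?thesis using I unfolding t Ie
    by (simp add: der_add[OF d] der_diff[OF d] der_sum[OF d] der_mult[OF d] da db dg dZ'
         sum.distrib algebra_simps)
qed

lemma lop_diff:
  assumes I: "I \<in> idx t"
    and da: "\<And>k i. (\<lambda>q. a q k i) differentiable (at p)"
    and db: "\<And>k i. (\<lambda>q. b q k i) differentiable (at p)"
    and dg: "\<And>k i. (\<lambda>q. g q k i) differentiable (at p)"
    and dZ: "\<And>I'. I' \<in> idx t \<Longrightarrow> (\<lambda>q. Z q I') differentiable (at p)"
  shows "(\<lambda>q. lop (a q) (b q) (g q) (Z q) I) differentiable (at p)"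
proof -
  obtain al be nu ga m n where t: "t = (al,be,nu,ga,m,n)" by (cases t) auto
  obtain A B C D E F where Ie: "I = (A,B,C,D,E,F)" by (cases I) auto
  note dZ' = dZ[unfolded t, simplified]
  show ?thesis using I unfolding t Ie
    by (simp add: da db dg dZ')
qed

lemma fin_lists: "finite A \<Longrightarrow> finite {xs. length xs = n \<and> set xs \<subseteq> A}"
  using finite_lists_length_eq[of A n] by (simp add: conj_commute)

lemma fin_idx[simp]: "finite (idx t)"
proof -
  obtain al be nu ga m n where t: "t = (al,be,nu,ga,m,n)" by (cases t) auto
  have "idx t = {xs. length xs = al \<and> set xs \<subseteq> sp_range} \<times> {xs. length xs = be \<and> set xs \<subseteq> sp_range}
     \<times> {xs. length xs = nu \<and> set xs \<subseteq> sp_range} \<times> {xs. length xs = ga \<and> set xs \<subseteq> sp_range}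
     \<times> {xs. length xs = m \<and> set xs \<subseteq> tn_range} \<times> {xs. length xs = n \<and> set xs \<subseteq> tn_range}"
    unfolding t by auto
  then show ?thesis by (simp add: fin_lists)
qed

lemma sm_diff: "smooth_on W f \<Longrightarrow> q \<in> W \<Longrightarrow> f differentiable (at q)"
  unfolding smooth_on_def using dder.simps(1) by metis

lemma sm_diff1: "smooth_on W f \<Longrightarrow> q \<in> W \<Longrightarrow> (\<lambda>x. dirD f v x) differentiable (at q)"
proof -
  assume a: "smooth_on W f" "q \<in> W"
  have "dder [v] f differentiable (at q)" using a unfolding smooth_on_def by blast
  moreover have "dder [v] f = (\<lambda>x. dirD f v x)" by (simp add: dirD_def)
  ultimately show ?thesis by simp
qed

definition lin2 :: "complex \<Rightarrow> complex \<Rightarrow> 'a \<Rightarrow> 'a \<Rightarrow> ('a::real_normed_vector \<Rightarrow> complex) \<Rightarrow> 'a \<Rightarrow> complex" where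
  "lin2 a b v1 v2 f q = a * dirD f v1 q + b * dirD f v2 q"

lemma wirt_lin: "wirt f c = lin2 (1/2) (-\<i>/2) (0, axis c 1) (0, axis c \<i>) f"
  by (rule ext) (simp add: lin2_def wirt_eq)
lemma wirtb_lin: "wirtb f c = lin2 (1/2) (\<i>/2) (0, axis c 1) (0, axis c \<i>) f"
  by (rule ext) (simp add: lin2_def wirtb_eq)
lemma pdx_lin: "pdx f k = lin2 1 0 (xdir k) (xdir k) f"
  by (rule ext) (simp add: lin2_def pdx_def)

lemma lin2_diff: "smooth_on W f \<Longrightarrow> q \<in> W \<Longrightarrow> (\<lambda>x. lin2 a b v1 v2 f x) differentiable (at q)"
  unfolding lin2_def by (intro differentiable_add differentiable_mult differentiable_const sm_diff1)

lemma lin2_comm: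
  assumes W: "open W" "p \<in> W" and f: "smooth_on W f"
  shows "lin2 a b v1 v2 (lin2 a' b' v1' v2' f) p = lin2 a' b' v1' v2' (lin2 a b v1 v2 f) p"
proof -
  have dF: "\<And>x. x \<in> W \<Longrightarrow> f differentiable (at x)" using sm_diff[OF f] .
  have d1: "(\<lambda>x. dirD f v x) differentiable (at p)" for v using sm_diff1[OF f W(2)] .
  have sy: "dirD (\<lambda>x. dirD f v x) w p = dirD (\<lambda>x. dirD f w x) v p" for v w
    using sym2[OF W dF, of v w] d1 unfolding dirD_def by simp
  have ex: "lin2 a b v1 v2 (lin2 a' b' v1' v2' f) p
     = a * (a' * dirD (\<lambda>x. dirD f v1' x) v1 p + b' * dirD (\<lambda>x. dirD f v2' x) v1 p)
     + b * (a' * dirD (\<lambda>x. dirD f v1' x) v2 p + b' * dirD (\<lambda>x. dirD f v2' x) v2 p)"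
    for a b v1 v2 a' b' v1' v2'
    unfolding lin2_def
    by (simp add: der_add[OF isder_dirD] der_cmult[OF isder_dirD] d1)
  show ?thesis unfolding ex using sy by (simp add: algebra_simps)
qed

lemma comm_wp: "open W \<Longrightarrow> p \<in> W \<Longrightarrow> smooth_on W f \<Longrightarrow> wirt (pdx f k) c p = pdx (wirt f c) k p"
  unfolding wirt_lin pdx_lin by (rule lin2_comm)
lemma comm_ww: "open W \<Longrightarrow> p \<in> W \<Longrightarrow> smooth_on W f \<Longrightarrow> wirt (wirt f c') c p = wirt (wirt f c) c' p"
  unfolding wirt_lin by (rule lin2_comm)
lemma comm_wwb: "open W \<Longrightarrow> p \<in> W \<Longrightarrow> smooth_on W f \<Longrightarrow> wirt (wirtb f c') c p = wirtb (wirt f c) c' p"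
  unfolding wirt_lin wirtb_lin by (rule lin2_comm)

lemma wirt_diff: "smooth_on W f \<Longrightarrow> q \<in> W \<Longrightarrow> (\<lambda>x. wirt f c x) differentiable (at q)"
  unfolding wirt_lin by (rule lin2_diff)
lemma wirtb_diff: "smooth_on W f \<Longrightarrow> q \<in> W \<Longrightarrow> (\<lambda>x. wirtb f c x) differentiable (at q)"
  unfolding wirtb_lin by (rule lin2_diff)
lemma pdx_diff: "smooth_on W f \<Longrightarrow> q \<in> W \<Longrightarrow> (\<lambda>x. pdx f k x) differentiable (at q)"
  unfolding pdx_lin by (rule lin2_diff)

lemma coord_hd: "((\<lambda>q::('c::finite) pt. snd q $ c') has_derivative (\<lambda>h. snd h $ c')) (at p)"
proof -
  have "bounded_linear (\<lambda>h::'c pt. snd h $ c')"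
    by (rule bounded_linear_compose[OF bounded_linear_vec_nth bounded_linear_snd])
  then show ?thesis by (rule bounded_linear.has_derivative[where g="\<lambda>x. x", OF _ has_derivative_ident])
qed

lemma ccoord_hd: "((\<lambda>q::('c::finite) pt. cnj (snd q $ c')) has_derivative (\<lambda>h. cnj (snd h $ c'))) (at p)"
  using bounded_linear.has_derivative[OF bounded_linear_cnj coord_hd] .

lemma coord_diff[simp]: "(\<lambda>q::('c::finite) pt. snd q $ c') differentiable (at p)"
  using coord_hd differentiable_def by blast
lemma ccoord_diff[simp]: "(\<lambda>q::('c::finite) pt. cnj (snd q $ c')) differentiable (at p)"
  using ccoord_hd differentiable_def by blast

lemma wirt_coord: "wirt (\<lambda>q::('c::finite) pt. snd q $ c') c p = (if c' = c then 1 else 0)"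
  unfolding wirt_def dirD_def using frechet_derivative_at[OF coord_hd, of c' p, symmetric]
  by (simp add: axis_def)

lemma wirt_ccoord: "wirt (\<lambda>q::('c::finite) pt. cnj (snd q $ c')) c p = 0"
  unfolding wirt_def dirD_def using frechet_derivative_at[OF ccoord_hd, of c' p, symmetric]
  by (simp add: axis_def)

lemma ofr_hd:
  assumes "(g has_derivative g') (at (fst p))"
  shows "((\<lambda>q::('c::finite) pt. complex_of_real (g (fst q))) has_derivative (\<lambda>h. complex_of_real (g' (fst h)))) (at p)"
proof -
  have "((\<lambda>q::'c pt. g (fst q)) has_derivative (\<lambda>h. g' (fst h))) (at p)"
    using diff_chain_at[OF has_derivative_fst[OF has_derivative_ident] assms] by (simp add: o_def)
  then show ?thesis by (rule bounded_linear.has_derivative[OF bounded_linear_of_real])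
qed

lemma ofr_diff: "g differentiable (at (fst p)) \<Longrightarrow> (\<lambda>q::('c::finite) pt. complex_of_real (g (fst q))) differentiable (at p)"
proof -
  assume "g differentiable (at (fst p))"
  then obtain g' where "(g has_derivative g') (at (fst p))" using differentiable_def by blast
  from ofr_hd[OF this] show ?thesis using differentiable_def by blast
qed

lemma wirt_ofr: assumes "g differentiable (at (fst p))"
  shows "wirt (\<lambda>q::('c::finite) pt. complex_of_real (g (fst q))) c p = 0"
proof -
  obtain g' where hg: "(g has_derivative g') (at (fst p))" using assms differentiable_def by blast
  then have "linear g'" using has_derivative_linear by blast
  then have "g' 0 = 0" by (rule linear_0)
  then show ?thesis unfolding wirt_def dirD_def using frechet_derivative_at[OF ofr_hd[OF hg], symmetric]
    by simp
qed

locale setting =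
  fixes J :: nat and ty :: "nat \<Rightarrow> sttype"
    and crd :: "nat \<Rightarrow> stidx \<Rightarrow> 'c::finite"
    and U :: "(real ^ 4) set"
    and Ups :: "nat \<Rightarrow> nat \<Rightarrow> real ^ 4 \<Rightarrow> real"
    and cA cAb cG :: "nat \<Rightarrow> 'c pt \<Rightarrow> cmat"
  assumes crd_inj: "inj_on (\<lambda>(Q, I). crd Q I) {(Q, I). Q \<in> {1..J} \<and> I \<in> idx (ty Q)}"
    and U_open: "open U"
    and Ups_smooth: "\<forall>k\<in>tn_range. \<forall>j\<in>tn_range. smooth_on U (Ups k j)"
    and conn_smooth: "\<forall>j\<in>tn_range. \<forall>k i. smooth_on (U \<times> UNIV) (\<lambda>q. cA j q k i)
                         \<and> smooth_on (U \<times> UNIV) (\<lambda>q. cAb j q k i) \<and> smooth_on (U \<times> UNIV) (\<lambda>q. cG j q k i)"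
begin

lemma W_open: "open (U \<times> (UNIV :: (complex ^ 'c) set))"
  using U_open by (simp add: open_Times)


lemma crd_eq_iff: "Q \<in> {1..J} \<Longrightarrow> I'' \<in> idx (ty Q) \<Longrightarrow> P \<in> {1..J} \<Longrightarrow> I0 \<in> idx (ty P) \<Longrightarrow>
   crd Q I'' = crd P I0 \<longleftrightarrow> Q = P \<and> I'' = I0"
proof -
  assume a: "Q \<in> {1..J}" "I'' \<in> idx (ty Q)" "P \<in> {1..J}" "I0 \<in> idx (ty P)"
  show ?thesis
  proof
    assume "crd Q I'' = crd P I0"
    then have "(Q, I'') = (P, I0)"
      using inj_onD[OF crd_inj, of "(Q, I'')" "(P, I0)"] a by simp
    then show "Q = P \<and> I'' = I0" by simp
  qed auto
qed

lemma delta_lemma: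
  assumes P: "P \<in> {1..J}"
  shows "(\<Sum>I0\<in>idx (ty P). y I0 * (\<Sum>Q\<in>{1..J}. \<Sum>I'\<in>idx (ty Q).
             lop a b g (\<lambda>I''. if crd Q I'' = crd P I0 then 1 else 0) I' * w Q I'))
       = (\<Sum>I0\<in>idx (ty P). lop a b g y I0 * w P I0)"
proof -
  have "(\<Sum>I0\<in>idx (ty P). y I0 * (\<Sum>Q\<in>{1..J}. \<Sum>I'\<in>idx (ty Q).
             lop a b g (\<lambda>I''. if crd Q I'' = crd P I0 then 1 else 0) I' * w Q I'))
      = (\<Sum>Q\<in>{1..J}. \<Sum>I'\<in>idx (ty Q). (\<Sum>I0\<in>idx (ty P). y I0 *
             lop a b g (\<lambda>I''. if crd Q I'' = crd P I0 then 1 else 0) I') * w Q I')"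
    by (simp add: sum_distrib_left sum_distrib_right mult.assoc sum.swap[of _ "idx (ty P)"])
  also have "\<dots> = (\<Sum>Q\<in>{1..J}. if Q = P then (\<Sum>I'\<in>idx (ty P). lop a b g y I' * w P I') else 0)"
  proof (rule sum.cong[OF refl])
    fix Q assume Q: "Q \<in> {1..J}"
    have inner: "(\<Sum>I0\<in>idx (ty P). y I0 * lop a b g (\<lambda>I''. if crd Q I'' = crd P I0 then 1 else 0) I')
        = (if Q = P then lop a b g y I' else 0)" if I': "I' \<in> idx (ty Q)" for I'
    proof -
      have "(\<Sum>I0\<in>idx (ty P). y I0 * lop a b g (\<lambda>I''. if crd Q I'' = crd P I0 then 1 else 0) I')
          = lop a b g (\<lambda>I''. \<Sum>I0\<in>idx (ty P). y I0 * (if crd Q I'' = crd P I0 then 1 else 0)) I'"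
        by (simp add: lop_Zsum lop_Zscale)
      also have "\<dots> = lop a b g (\<lambda>I''. if Q = P then y I'' else 0) I'"
      proof (rule lop_cong[OF I'])
        fix I'' assume I'': "I'' \<in> idx (ty Q)"
        have "(\<Sum>I0\<in>idx (ty P). y I0 * (if crd Q I'' = crd P I0 then 1 else 0))
           = (\<Sum>I0\<in>idx (ty P). if I0 = I'' then (if Q = P then y I0 else 0) else 0)"
          using crd_eq_iff[OF Q I'' P] by (intro sum.cong refl) auto
        also have "\<dots> = (if Q = P then y I'' else 0)"
          using I'' by (cases "Q = P") auto
        finally show "(\<Sum>I0\<in>idx (ty P). y I0 * (if crd Q I'' = crd P I0 then 1 else 0)) = (if Q = P then y I'' else 0)" .
      qed
      also have "\<dots> = (if Q = P then lop a b g y I' else 0)"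
        by (cases "Q = P") (simp_all add: lop_Zzero)
      finally show ?thesis .
    qed
    show "(\<Sum>I'\<in>idx (ty Q). (\<Sum>I0\<in>idx (ty P). y I0 *
             lop a b g (\<lambda>I''. if crd Q I'' = crd P I0 then 1 else 0) I') * w Q I')
        = (if Q = P then (\<Sum>I'\<in>idx (ty P). lop a b g y I' * w P I') else 0)"
    proof -
      have "(\<Sum>I'\<in>idx (ty Q). (\<Sum>I0\<in>idx (ty P). y I0 *
             lop a b g (\<lambda>I''. if crd Q I'' = crd P I0 then 1 else 0) I') * w Q I')
          = (\<Sum>I'\<in>idx (ty Q). (if Q = P then lop a b g y I' else 0) * w Q I')"
        by (rule sum.cong[OF refl]) (simp add: inner)
      then show ?thesis by (cases "Q = P") simp_all
    qed
  qed
  also have "\<dots> = (\<Sum>I0\<in>idx (ty P). lop a b g y I0 * w P I0)"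
    using P by (simp add: sum.delta')
  finally show ?thesis .
qed

definition Dj :: "nat \<Rightarrow> ('c pt \<Rightarrow> complex) \<Rightarrow> 'c pt \<Rightarrow> complex" where
  "Dj j f q =
      (\<Sum>k\<in>tn_range. complex_of_real (Ups k j (fst q)) * pdx f k q)
    - (\<Sum>Q\<in>{1..J}. \<Sum>I'\<in>idx (ty Q).
          Lf (cA j) (cAb j) (cG j) (Sfield crd Q) q I' * wirt f (crd Q I') q)
    - (\<Sum>Q\<in>{1..J}. \<Sum>I'\<in>idx (tauty (ty Q)).
          Lf (cA j) (cAb j) (cG j) (tauF (Sfield crd Q)) q I'
            * wirtb f (crd Q (swapidx I')) q)"

lemma nabla_j_eq: "nabla_j J ty crd Ups cA cAb cG j Z q I = Dj j (\<lambda>q. Z q I) q + Lf (cA j) (cAb j) (cG j) Z q I"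
  unfolding nabla_j_def Dj_def by simp

lemma nablaX_eq: "nablaX J ty crd Ups cA cAb cG X Z q I
   = (\<Sum>j\<in>tn_range. X q (vidx j) * (Dj j (\<lambda>q. Z q I) q + Lf (cA j) (cAb j) (cG j) Z q I))"
  unfolding nablaX_def nabla_j_eq ..

context
  fixes p :: "'c pt" and j :: nat
  assumes p: "p \<in> U \<times> UNIV" and j: "j \<in> tn_range"
begin

lemma cA_diff[simp]: "(\<lambda>q. cA j q k i) differentiable (at p)"
  using conn_smooth j p sm_diff by blast
lemma cAb_diff[simp]: "(\<lambda>q. cAb j q k i) differentiable (at p)"
  using conn_smooth j p sm_diff by blast
lemma cG_diff[simp]: "(\<lambda>q. cG j q k i) differentiable (at p)"
  using conn_smooth j p sm_diff by blast

lemma Ups_diff[simp]: "k \<in> tn_range \<Longrightarrow> (\<lambda>q. complex_of_real (Ups k j (fst q))) differentiable (at p)"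
  using Ups_smooth j p sm_diff[of U "Ups k j" "fst p"] by (intro ofr_diff) auto

lemma Ups_wirt[simp]: "k \<in> tn_range \<Longrightarrow> wirt (\<lambda>q. complex_of_real (Ups k j (fst q))) c p = 0"
  using Ups_smooth j p sm_diff[of U "Ups k j" "fst p"] by (intro wirt_ofr) auto

lemma LfS_diff[simp]: "I' \<in> idx (ty Q) \<Longrightarrow> (\<lambda>q. Lf (cA j) (cAb j) (cG j) (Sfield crd Q) q I') differentiable (at p)"
  unfolding Lf_def Sfield_def by (rule lop_diff) auto

lemma LftS_diff[simp]: "I' \<in> idx (tauty (ty Q)) \<Longrightarrow> (\<lambda>q. Lf (cA j) (cAb j) (cG j) (tauF (Sfield crd Q)) q I') differentiable (at p)"
  unfolding Lf_def Sfield_def tauF_def tau_st_def by (rule lop_diff) auto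

lemma LfZ_diff: "smooth_field (U \<times> UNIV) t Z \<Longrightarrow> I \<in> idx t \<Longrightarrow> (\<lambda>q. Lf (cA j) (cAb j) (cG j) Z q I) differentiable (at p)"
  unfolding Lf_def smooth_field_def by (rule lop_diff) (auto intro: sm_diff[OF _ p])

lemma Dj_diff: "smooth_on (U \<times> UNIV) f \<Longrightarrow> (\<lambda>q. Dj j f q) differentiable (at p)"
  unfolding Dj_def
  by (intro differentiable_diff differentiable_sum ballI differentiable_mult Ups_diff LfS_diff LftS_diff
      fin_idx finite_atLeastAtMost fin_tn pdx_diff[OF _ p] wirt_diff[OF _ p] wirtb_diff[OF _ p]) auto

lemma isder_Dj: "isder (\<lambda>f. Dj j f p) p"
  unfolding Dj_def
  by (intro isder_diff isder_sum isder_scale isder_pdx isder_wirt isder_wirtb)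

lemma wirt_LfS: "I' \<in> idx (ty Q) \<Longrightarrow> wirt (\<lambda>q. Lf (cA j) (cAb j) (cG j) (Sfield crd Q) q I') c p
   = lop (\<lambda>k i. wirt (\<lambda>q. cA j q k i) c p) (\<lambda>k i. wirt (\<lambda>q. cAb j q k i) c p) (\<lambda>k i. wirt (\<lambda>q. cG j q k i) c p)
          (Sfield crd Q p) I'
     + lop (cA j p) (cAb j p) (cG j p) (\<lambda>I''. if crd Q I'' = c then 1 else 0) I'"
  unfolding Lf_def
  by (subst lop_der[OF isder_wirt, of I' "ty Q"]) (auto simp: Sfield_def wirt_coord)

lemma wirt_LftS: "I' \<in> idx (tauty (ty Q)) \<Longrightarrow> wirt (\<lambda>q. Lf (cA j) (cAb j) (cG j) (tauF (Sfield crd Q)) q I') c p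
   = lop (\<lambda>k i. wirt (\<lambda>q. cA j q k i) c p) (\<lambda>k i. wirt (\<lambda>q. cAb j q k i) c p) (\<lambda>k i. wirt (\<lambda>q. cG j q k i) c p)
          (tauF (Sfield crd Q) p) I'"
  unfolding Lf_def
  by (subst lop_der[OF isder_wirt, of I' "tauty (ty Q)"]) (auto simp: Sfield_def tauF_def tau_st_def wirt_ccoord lop_Zzero)

lemma wirt_LfZ: "smooth_field (U \<times> UNIV) t Z \<Longrightarrow> I \<in> idx t \<Longrightarrow> wirt (\<lambda>q. Lf (cA j) (cAb j) (cG j) Z q I) c p
   = lop (\<lambda>k i. wirt (\<lambda>q. cA j q k i) c p) (\<lambda>k i. wirt (\<lambda>q. cAb j q k i) c p) (\<lambda>k i. wirt (\<lambda>q. cG j q k i) c p)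
          (Z p) I
     + lop (cA j p) (cAb j p) (cG j p) (\<lambda>I'. wirt (\<lambda>q. Z q I') c p) I"
  unfolding Lf_def smooth_field_def
  by (subst lop_der[OF isder_wirt, of I t]) (auto intro: sm_diff[OF _ p])

lemma comm_Dj:
  assumes f: "smooth_on (U \<times> UNIV) f"
  shows "wirt (\<lambda>q. Dj j f q) c p - Dj j (wirt f c) p
    = - (\<Sum>Q\<in>{1..J}. \<Sum>I'\<in>idx (ty Q).
          wirt (\<lambda>q. Lf (cA j) (cAb j) (cG j) (Sfield crd Q) q I') c p * wirt f (crd Q I') p)
      - (\<Sum>Q\<in>{1..J}. \<Sum>I'\<in>idx (tauty (ty Q)).
          wirt (\<lambda>q. Lf (cA j) (cAb j) (cG j) (tauF (Sfield crd Q)) q I') c p * wirtb f (crd Q (swapidx I')) p)"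
proof -
  note W = W_open p
  have e1: "wirt (\<lambda>q. Dj j f q) c p =
      (\<Sum>k\<in>tn_range. complex_of_real (Ups k j (fst p)) * wirt (pdx f k) c p)
    - (\<Sum>Q\<in>{1..J}. \<Sum>I'\<in>idx (ty Q).
          wirt (\<lambda>q. Lf (cA j) (cAb j) (cG j) (Sfield crd Q) q I') c p * wirt f (crd Q I') p
        + Lf (cA j) (cAb j) (cG j) (Sfield crd Q) p I' * wirt (wirt f (crd Q I')) c p)
    - (\<Sum>Q\<in>{1..J}. \<Sum>I'\<in>idx (tauty (ty Q)).
          wirt (\<lambda>q. Lf (cA j) (cAb j) (cG j) (tauF (Sfield crd Q)) q I') c p * wirtb f (crd Q (swapidx I')) p
        + Lf (cA j) (cAb j) (cG j) (tauF (Sfield crd Q)) p I' * wirt (wirtb f (crd Q (swapidx I'))) c p)"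
    unfolding Dj_def
    by (simp add: der_diff[OF isder_wirt] der_sum[OF isder_wirt] der_mult[OF isder_wirt]
        pdx_diff[OF f p] wirt_diff[OF f p] wirtb_diff[OF f p])
  have e2: "Dj j (wirt f c) p =
      (\<Sum>k\<in>tn_range. complex_of_real (Ups k j (fst p)) * pdx (wirt f c) k p)
    - (\<Sum>Q\<in>{1..J}. \<Sum>I'\<in>idx (ty Q).
          Lf (cA j) (cAb j) (cG j) (Sfield crd Q) p I' * wirt (wirt f c) (crd Q I') p)
    - (\<Sum>Q\<in>{1..J}. \<Sum>I'\<in>idx (tauty (ty Q)).
          Lf (cA j) (cAb j) (cG j) (tauF (Sfield crd Q)) p I' * wirtb (wirt f c) (crd Q (swapidx I')) p)"
    unfolding Dj_def ..
  show ?thesis unfolding e1 e2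
    by (simp add: comm_wp[OF W f] comm_ww[OF W f, of _ c] comm_wwb[OF W f] sum.distrib algebra_simps)
qed

end
end

lemma swap4:
  fixes f :: "'a \<Rightarrow> 'b \<Rightarrow> 'c \<Rightarrow> 'd \<Rightarrow> complex"
  shows "(\<Sum>a\<in>A. \<Sum>b\<in>B a. (\<Sum>c\<in>C. \<Sum>d\<in>D. f a b c d) * w a b)
       = (\<Sum>c\<in>C. \<Sum>d\<in>D. \<Sum>a\<in>A. \<Sum>b\<in>B a. f a b c d * w a b)"
proof -
  have "(\<Sum>a\<in>A. \<Sum>b\<in>B a. (\<Sum>c\<in>C. \<Sum>d\<in>D. f a b c d) * w a b)
      = (\<Sum>a\<in>A. \<Sum>b\<in>B a. \<Sum>c\<in>C. \<Sum>d\<in>D. f a b c d * w a b)"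
    by (simp add: sum_distrib_right)
  also have "\<dots> = (\<Sum>a\<in>A. \<Sum>c\<in>C. \<Sum>b\<in>B a. \<Sum>d\<in>D. f a b c d * w a b)"
    by (rule sum.cong[OF refl], rule sum.swap)
  also have "\<dots> = (\<Sum>c\<in>C. \<Sum>a\<in>A. \<Sum>b\<in>B a. \<Sum>d\<in>D. f a b c d * w a b)"
    by (rule sum.swap)
  also have "\<dots> = (\<Sum>c\<in>C. \<Sum>a\<in>A. \<Sum>d\<in>D. \<Sum>b\<in>B a. f a b c d * w a b)"
    by (intro sum.cong refl, rule sum.swap)
  also have "\<dots> = (\<Sum>c\<in>C. \<Sum>d\<in>D. \<Sum>a\<in>A. \<Sum>b\<in>B a. f a b c d * w a b)"
    by (intro sum.cong refl, rule sum.swap)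
  finally show ?thesis .
qed

lemma perj:
  fixes x :: complex and y wZ DY DwZ wDZ LwZ wX NZ LY :: "'i \<Rightarrow> complex"
    and DZ LZ :: complex
    and SL EL TL :: "'i \<Rightarrow> 'q \<Rightarrow> 'i \<Rightarrow> complex" and w wb :: "'q \<Rightarrow> 'i \<Rightarrow> complex"
  assumes C: "\<And>I0. I0 \<in> S \<Longrightarrow> DwZ I0 = wDZ I0 + (\<Sum>Q\<in>Qs. \<Sum>I'\<in>Iq Q. (SL I0 Q I' + EL I0 Q I') * w Q I')
                  + (\<Sum>Q\<in>Qs. \<Sum>I'\<in>Iqt Q. TL I0 Q I' * wb Q I')"
   and D: "(\<Sum>I0\<in>S. y I0 * (\<Sum>Q\<in>Qs. \<Sum>I'\<in>Iq Q. EL I0 Q I' * w Q I')) = (\<Sum>I0\<in>S. LY I0 * wZ I0)"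
  shows "x * ((\<Sum>I0\<in>S. DY I0 * wZ I0 + y I0 * DwZ I0) + (\<Sum>I0\<in>S. y I0 * LwZ I0))
        - (\<Sum>I0\<in>S. y I0 * (wX I0 * (DZ + LZ) + x * (wDZ I0 + (NZ I0 + LwZ I0))))
      = (\<Sum>I0\<in>S. x * (DY I0 + LY I0) * wZ I0)
        + (\<Sum>I0\<in>S. \<Sum>Q\<in>Qs. \<Sum>I'\<in>Iq Q. x * y I0 * SL I0 Q I' * w Q I')
        + (\<Sum>I0\<in>S. \<Sum>Q\<in>Qs. \<Sum>I'\<in>Iqt Q. x * y I0 * TL I0 Q I' * wb Q I')
        - (\<Sum>I0\<in>S. y I0 * wX I0) * (DZ + LZ)
        - (\<Sum>I0\<in>S. x * y I0 * NZ I0)"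
proof -
  have 1: "(\<Sum>I0\<in>S. DY I0 * wZ I0 + y I0 * DwZ I0)
     = (\<Sum>I0\<in>S. DY I0 * wZ I0 + y I0 * wDZ I0) + (\<Sum>I0\<in>S. y I0 * (\<Sum>Q\<in>Qs. \<Sum>I'\<in>Iq Q. EL I0 Q I' * w Q I'))
       + (\<Sum>I0\<in>S. \<Sum>Q\<in>Qs. \<Sum>I'\<in>Iq Q. y I0 * SL I0 Q I' * w Q I')
       + (\<Sum>I0\<in>S. \<Sum>Q\<in>Qs. \<Sum>I'\<in>Iqt Q. y I0 * TL I0 Q I' * wb Q I')"
    by (simp add: C sum.distrib sum_distrib_left distrib_left distrib_right mult.assoc add_ac cong: sum.cong)
  show ?thesis unfolding 1 D
    by (simp add: sum_distrib_left sum_distrib_right sum.distrib sum_subtractf algebra_simps)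
qed

lemma alg_main:
  fixes x :: "'j \<Rightarrow> complex" and y wZ :: "'i \<Rightarrow> complex"
    and DY DwZ wDZ LwZ wX NZ LY :: "'j \<Rightarrow> 'i \<Rightarrow> complex"
    and DZ LZ :: "'j \<Rightarrow> complex"
    and SL EL TL :: "'j \<Rightarrow> 'i \<Rightarrow> 'q \<Rightarrow> 'i \<Rightarrow> complex" and w wb :: "'q \<Rightarrow> 'i \<Rightarrow> complex"
  assumes C: "\<And>j I0. j \<in> T \<Longrightarrow> I0 \<in> S \<Longrightarrow> DwZ j I0 = wDZ j I0 + (\<Sum>Q\<in>Qs. \<Sum>I'\<in>Iq Q. (SL j I0 Q I' + EL j I0 Q I') * w Q I')
                  + (\<Sum>Q\<in>Qs. \<Sum>I'\<in>Iqt Q. TL j I0 Q I' * wb Q I')"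
   and D: "\<And>j. j \<in> T \<Longrightarrow> (\<Sum>I0\<in>S. y I0 * (\<Sum>Q\<in>Qs. \<Sum>I'\<in>Iq Q. EL j I0 Q I' * w Q I')) = (\<Sum>I0\<in>S. LY j I0 * wZ I0)"
  shows "(\<Sum>j\<in>T. x j * ((\<Sum>I0\<in>S. DY j I0 * wZ I0 + y I0 * DwZ j I0) + (\<Sum>I0\<in>S. y I0 * LwZ j I0)))
   - (\<Sum>I0\<in>S. y I0 * (\<Sum>j\<in>T. wX j I0 * (DZ j + LZ j) + x j * (wDZ j I0 + (NZ j I0 + LwZ j I0))))
  = (\<Sum>I0\<in>S. (\<Sum>j\<in>T. x j * (DY j I0 + LY j I0)) * wZ I0)
   + (\<Sum>Q\<in>Qs. \<Sum>I'\<in>Iq Q. - (- (\<Sum>j\<in>T. \<Sum>I0\<in>S. x j * y I0 * SL j I0 Q I')) * w Q I')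
   + (\<Sum>Q\<in>Qs. \<Sum>I'\<in>Iqt Q. - (- (\<Sum>j\<in>T. \<Sum>I0\<in>S. x j * y I0 * TL j I0 Q I')) * wb Q I')
   - (\<Sum>j\<in>T. (\<Sum>I0\<in>S. y I0 * wX j I0) * (DZ j + LZ j))
   + - (\<Sum>j\<in>T. \<Sum>I0\<in>S. x j * y I0 * NZ j I0)"
proof -
  have "(\<Sum>I0\<in>S. y I0 * (\<Sum>j\<in>T. wX j I0 * (DZ j + LZ j) + x j * (wDZ j I0 + (NZ j I0 + LwZ j I0))))
      = (\<Sum>j\<in>T. \<Sum>I0\<in>S. y I0 * (wX j I0 * (DZ j + LZ j) + x j * (wDZ j I0 + (NZ j I0 + LwZ j I0))))"
    by (simp add: sum_distrib_left sum.swap[of _ S])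
  then have "(\<Sum>j\<in>T. x j * ((\<Sum>I0\<in>S. DY j I0 * wZ I0 + y I0 * DwZ j I0) + (\<Sum>I0\<in>S. y I0 * LwZ j I0)))
   - (\<Sum>I0\<in>S. y I0 * (\<Sum>j\<in>T. wX j I0 * (DZ j + LZ j) + x j * (wDZ j I0 + (NZ j I0 + LwZ j I0))))
   = (\<Sum>j\<in>T. x j * ((\<Sum>I0\<in>S. DY j I0 * wZ I0 + y I0 * DwZ j I0) + (\<Sum>I0\<in>S. y I0 * LwZ j I0))
        - (\<Sum>I0\<in>S. y I0 * (wX j I0 * (DZ j + LZ j) + x j * (wDZ j I0 + (NZ j I0 + LwZ j I0)))))"
    by (simp add: sum_subtractf)
  also have "\<dots> = (\<Sum>j\<in>T. (\<Sum>I0\<in>S. x j * (DY j I0 + LY j I0) * wZ I0)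
        + (\<Sum>I0\<in>S. \<Sum>Q\<in>Qs. \<Sum>I'\<in>Iq Q. x j * y I0 * SL j I0 Q I' * w Q I')
        + (\<Sum>I0\<in>S. \<Sum>Q\<in>Qs. \<Sum>I'\<in>Iqt Q. x j * y I0 * TL j I0 Q I' * wb Q I')
        - (\<Sum>I0\<in>S. y I0 * wX j I0) * (DZ j + LZ j)
        - (\<Sum>I0\<in>S. x j * y I0 * NZ j I0))"
    by (rule sum.cong[OF refl], rule perj[OF C D]) auto
  also have "\<dots> = (\<Sum>I0\<in>S. (\<Sum>j\<in>T. x j * (DY j I0 + LY j I0)) * wZ I0)
   + (\<Sum>Q\<in>Qs. \<Sum>I'\<in>Iq Q. - (- (\<Sum>j\<in>T. \<Sum>I0\<in>S. x j * y I0 * SL j I0 Q I')) * w Q I')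
   + (\<Sum>Q\<in>Qs. \<Sum>I'\<in>Iqt Q. - (- (\<Sum>j\<in>T. \<Sum>I0\<in>S. x j * y I0 * TL j I0 Q I')) * wb Q I')
   - (\<Sum>j\<in>T. (\<Sum>I0\<in>S. y I0 * wX j I0) * (DZ j + LZ j))
   + - (\<Sum>j\<in>T. \<Sum>I0\<in>S. x j * y I0 * NZ j I0)"
  proof -
    have a: "(\<Sum>I0\<in>S. (\<Sum>j\<in>T. x j * (DY j I0 + LY j I0)) * wZ I0) = (\<Sum>j\<in>T. \<Sum>I0\<in>S. x j * (DY j I0 + LY j I0) * wZ I0)"
      by (simp add: sum_distrib_right sum.swap[of _ S])
    have b: "(\<Sum>Q\<in>Qs. \<Sum>I'\<in>Iq Q. - (- (\<Sum>j\<in>T. \<Sum>I0\<in>S. x j * y I0 * SL j I0 Q I')) * w Q I')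
        = (\<Sum>j\<in>T. \<Sum>I0\<in>S. \<Sum>Q\<in>Qs. \<Sum>I'\<in>Iq Q. x j * y I0 * SL j I0 Q I' * w Q I')"
      unfolding minus_minus by (rule swap4)
    have c: "(\<Sum>Q\<in>Qs. \<Sum>I'\<in>Iqt Q. - (- (\<Sum>j\<in>T. \<Sum>I0\<in>S. x j * y I0 * TL j I0 Q I')) * wb Q I')
        = (\<Sum>j\<in>T. \<Sum>I0\<in>S. \<Sum>Q\<in>Qs. \<Sum>I'\<in>Iqt Q. x j * y I0 * TL j I0 Q I' * wb Q I')"
      unfolding minus_minus by (rule swap4)
    show ?thesis unfolding a b c
      by (simp add: sum.distrib sum_subtractf)
  qed
  finally show ?thesis .
qed

theorem mainTheorem7:
  fixes J :: nat and ty :: "nat \<Rightarrow> sttype"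
    and crd :: "nat \<Rightarrow> stidx \<Rightarrow> 'c::finite"
    and U :: "(real ^ 4) set"
    and Ups :: "nat \<Rightarrow> nat \<Rightarrow> real ^ 4 \<Rightarrow> real"
    and cA cAb cG :: "nat \<Rightarrow> 'c pt \<Rightarrow> cmat"
    and P :: nat and X Y Z :: "'c field" and tz :: sttype
  assumes crd_bij: "bij_betw (\<lambda>(Q, I). crd Q I) {(Q, I). Q \<in> {1..J} \<and> I \<in> idx (ty Q)} UNIV"
    and U_open: "open U"
    and Ups_smooth: "\<forall>k\<in>tn_range. \<forall>j\<in>tn_range. smooth_on U (Ups k j)"
    and Ups_frame: "\<forall>x\<in>U. \<forall>c :: nat \<Rightarrow> real.
                      (\<forall>k\<in>tn_range. (\<Sum>j\<in>tn_range. c j * Ups k j x) = 0) \<longrightarrow> (\<forall>j\<in>tn_range. c j = 0)"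
    and conn_smooth: "\<forall>j\<in>tn_range. \<forall>k i. smooth_on (U \<times> UNIV) (\<lambda>q. cA j q k i)
                         \<and> smooth_on (U \<times> UNIV) (\<lambda>q. cAb j q k i) \<and> smooth_on (U \<times> UNIV) (\<lambda>q. cG j q k i)"
    and P_range: "P \<in> {1..J}"
    and X_smooth: "smooth_field (U \<times> UNIV) (0, 0, 0, 0, 1, 0) X"
    and Y_smooth: "smooth_field (U \<times> UNIV) (ty P) Y"
    and Z_smooth: "smooth_field (U \<times> UNIV) tz Z"
  shows
   "let nab = nablaX J ty crd Ups cA cAb cG;
        Np  = (\<lambda>p k i. - (\<Sum>j\<in>tn_range. \<Sum>I\<in>idx (ty P).
                    X p (vidx j) * Y p I * wirt (\<lambda>q. cA j q k i) (crd P I) p));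
        Nbp = (\<lambda>p k i. - (\<Sum>j\<in>tn_range. \<Sum>I\<in>idx (ty P).
                    X p (vidx j) * Y p I * wirt (\<lambda>q. cAb j q k i) (crd P I) p));
        Ngp = (\<lambda>p k i. - (\<Sum>j\<in>tn_range. \<Sum>I\<in>idx (ty P).
                    X p (vidx j) * Y p I * wirt (\<lambda>q. cG j q k i) (crd P I) p));
        UQ  = (\<lambda>Q p I. - Lf Np Nbp Ngp (Sfield crd Q) p I);
        UbQ = (\<lambda>Q p I. - Lf Np Nbp Ngp (tauF (Sfield crd Q)) p I);
        Uf  = nab X Y;
        Vf  = nvec crd ty P Y X
    in \<forall>p\<in>U \<times> UNIV. \<forall>I\<in>idx tz.
         nab X (nvec crd ty P Y Z) p I - nvec crd ty P Y (nab X Z) p I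
       = nvec crd ty P Uf Z p I
         + (\<Sum>Q\<in>{1..J}. nvec crd ty Q (UQ Q) Z p I)
         + (\<Sum>Q\<in>{1..J}. nbar crd ty Q (UbQ Q) Z p I)
         - nab Vf Z p I
         + Lf Np Nbp Ngp Z p I"
proof -
  interpret setting J ty crd U Ups cA cAb cG
    using crd_bij U_open Ups_smooth conn_smooth by unfold_locales (auto dest: bij_betw_imp_inj_on)
  note W = W_open
  have Ysm: "\<And>I0. I0 \<in> idx (ty P) \<Longrightarrow> smooth_on (U \<times> UNIV) (\<lambda>q. Y q I0)"
    using Y_smooth unfolding smooth_field_def by blast
  have Zsm: "\<And>I'. I' \<in> idx tz \<Longrightarrow> smooth_on (U \<times> UNIV) (\<lambda>q. Z q I')"
    using Z_smooth unfolding smooth_field_def by blast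
  have Xsm: "\<And>j. j \<in> tn_range \<Longrightarrow> smooth_on (U \<times> UNIV) (\<lambda>q. X q (vidx j))"
    using X_smooth unfolding smooth_field_def by (auto simp: vidx_def tn_range_def)
  have lopN: "\<And>(x::nat \<Rightarrow> complex) (y::stidx \<Rightarrow> complex) a b g T S Z I'.
     lop (\<lambda>k i. - (\<Sum>j\<in>T. \<Sum>I0\<in>S. x j * y I0 * a j I0 k i)) (\<lambda>k i. - (\<Sum>j\<in>T. \<Sum>I0\<in>S. x j * y I0 * b j I0 k i))
         (\<lambda>k i. - (\<Sum>j\<in>T. \<Sum>I0\<in>S. x j * y I0 * g j I0 k i)) Z I'
     = - (\<Sum>j\<in>T. \<Sum>I0\<in>S. x j * y I0 * lop (a j I0) (b j I0) (g j I0) Z I')"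
    by (simp add: lop_Tneg lop_Tsum lop_Tscale)
  show ?thesis unfolding Let_def
    apply (intro ballI)
    subgoal premises prems for p I
  proof -
    note p = prems(1) and I = prems(2)
    have L1: "nablaX J ty crd Ups cA cAb cG X (nvec crd ty P Y Z) p I
      = (\<Sum>j\<in>tn_range. X p (vidx j) * ((\<Sum>I0\<in>idx (ty P). Dj j (\<lambda>q. Y q I0) p * wirt (\<lambda>q. Z q I) (crd P I0) p
             + Y p I0 * Dj j (wirt (\<lambda>q. Z q I) (crd P I0)) p)
          + (\<Sum>I0\<in>idx (ty P). Y p I0 * lop (cA j p) (cAb j p) (cG j p) (\<lambda>I'. wirt (\<lambda>q. Z q I') (crd P I0) p) I)))"
      unfolding nablaX_eq
    proof (rule sum.cong[OF refl])
      fix j assume j: "j \<in> tn_range"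
      have a: "Dj j (\<lambda>q. nvec crd ty P Y Z q I) p = (\<Sum>I0\<in>idx (ty P). Dj j (\<lambda>q. Y q I0) p * wirt (\<lambda>q. Z q I) (crd P I0) p
             + Y p I0 * Dj j (wirt (\<lambda>q. Z q I) (crd P I0)) p)"
        unfolding nvec_def
        by (simp add: der_sum[OF isder_Dj[OF p j]] der_mult[OF isder_Dj[OF p j]] sm_diff[OF Ysm p]
            wirt_diff[OF Zsm[OF I] p])
      have b: "Lf (cA j) (cAb j) (cG j) (nvec crd ty P Y Z) p I
         = (\<Sum>I0\<in>idx (ty P). Y p I0 * lop (cA j p) (cAb j p) (cG j p) (\<lambda>I'. wirt (\<lambda>q. Z q I') (crd P I0) p) I)"
        unfolding Lf_def nvec_def by (simp add: lop_Zsum lop_Zscale)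
      show "X p (vidx j) * (Dj j (\<lambda>q. nvec crd ty P Y Z q I) p + Lf (cA j) (cAb j) (cG j) (nvec crd ty P Y Z) p I) = 
         X p (vidx j) * ((\<Sum>I0\<in>idx (ty P). Dj j (\<lambda>q. Y q I0) p * wirt (\<lambda>q. Z q I) (crd P I0) p
             + Y p I0 * Dj j (wirt (\<lambda>q. Z q I) (crd P I0)) p)
          + (\<Sum>I0\<in>idx (ty P). Y p I0 * lop (cA j p) (cAb j p) (cG j p) (\<lambda>I'. wirt (\<lambda>q. Z q I') (crd P I0) p) I))"
        unfolding a b ..
    qed
    have L2: "nvec crd ty P Y (nablaX J ty crd Ups cA cAb cG X Z) p I
      = (\<Sum>I0\<in>idx (ty P). Y p I0 * (\<Sum>j\<in>tn_range.
            wirt (\<lambda>q. X q (vidx j)) (crd P I0) p * (Dj j (\<lambda>q. Z q I) p + Lf (cA j) (cAb j) (cG j) Z p I)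
          + X p (vidx j) * (wirt (\<lambda>q. Dj j (\<lambda>q. Z q I) q) (crd P I0) p
             + (lop (\<lambda>k i. wirt (\<lambda>q. cA j q k i) (crd P I0) p) (\<lambda>k i. wirt (\<lambda>q. cAb j q k i) (crd P I0) p)
                    (\<lambda>k i. wirt (\<lambda>q. cG j q k i) (crd P I0) p) (Z p) I
               + lop (cA j p) (cAb j p) (cG j p) (\<lambda>I'. wirt (\<lambda>q. Z q I') (crd P I0) p) I))))"
      unfolding nvec_def nablaX_eq
      by (simp add: der_sum[OF isder_wirt] der_mult[OF isder_wirt] der_add[OF isder_wirt]
          sm_diff[OF Xsm p] Dj_diff[OF p _ Zsm[OF I]] LfZ_diff[OF p _ Z_smooth I] wirt_LfZ[OF p _ Z_smooth I])
    have T1: "nvec crd ty P (nablaX J ty crd Ups cA cAb cG X Y) Z p I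
      = (\<Sum>I0\<in>idx (ty P). (\<Sum>j\<in>tn_range. X p (vidx j) * (Dj j (\<lambda>q. Y q I0) p + lop (cA j p) (cAb j p) (cG j p) (Y p) I0))
            * wirt (\<lambda>q. Z q I) (crd P I0) p)"
      unfolding nvec_def nablaX_eq Lf_def ..
    have T4: "nablaX J ty crd Ups cA cAb cG (nvec crd ty P Y X) Z p I
      = (\<Sum>j\<in>tn_range. (\<Sum>I0\<in>idx (ty P). Y p I0 * wirt (\<lambda>q. X q (vidx j)) (crd P I0) p)
           * (Dj j (\<lambda>q. Z q I) p + Lf (cA j) (cAb j) (cG j) Z p I))"
      unfolding nvec_def nablaX_eq ..
    show ?thesis
      unfolding L1 L2 T1 T4 
      apply (simp only: nvec_def nbar_def Lf_def lopN)
      apply (rule alg_main[where EL = "\<lambda>j I0 Q I'. lop (cA j p) (cAb j p) (cG j p) (\<lambda>I''. if crd Q I'' = crd P I0 then 1 else 0) I'"])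
      subgoal for j I0
      proof -
        assume j: "j \<in> tn_range" and I0: "I0 \<in> idx (ty P)"
        note cm = comm_Dj[OF p j Zsm[OF I], of "crd P I0"]
        have s1: "(\<Sum>Q\<in>{1..J}. \<Sum>I'\<in>idx (ty Q).
          wirt (\<lambda>q. Lf (cA j) (cAb j) (cG j) (Sfield crd Q) q I') (crd P I0) p * wirt (\<lambda>q. Z q I) (crd Q I') p)
          = (\<Sum>Q\<in>{1..J}. \<Sum>I'\<in>idx (ty Q).
                 (lop (\<lambda>k i. wirt (\<lambda>q. cA j q k i) (crd P I0) p)
                   (\<lambda>k i. wirt (\<lambda>q. cAb j q k i) (crd P I0) p)
                   (\<lambda>k i. wirt (\<lambda>q. cG j q k i) (crd P I0) p)
                   (Sfield crd Q p) I' +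
                  lop (cA j p) (cAb j p) (cG j p) (\<lambda>I''. if crd Q I'' = crd P I0 then 1 else 0) I') *
                 wirt (\<lambda>q. Z q I) (crd Q I') p)"
          by (intro sum.cong refl) (simp add: wirt_LfS[OF p j])
        have s2: "(\<Sum>Q\<in>{1..J}. \<Sum>I'\<in>idx (tauty (ty Q)).
          wirt (\<lambda>q. Lf (cA j) (cAb j) (cG j) (tauF (Sfield crd Q)) q I') (crd P I0) p * wirtb (\<lambda>q. Z q I) (crd Q (swapidx I')) p)
          = (\<Sum>Q\<in>{1..J}. \<Sum>I'\<in>idx (tauty (ty Q)).
                 lop (\<lambda>k i. wirt (\<lambda>q. cA j q k i) (crd P I0) p)
                  (\<lambda>k i. wirt (\<lambda>q. cAb j q k i) (crd P I0) p)
                  (\<lambda>k i. wirt (\<lambda>q. cG j q k i) (crd P I0) p)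
                  (tauF (Sfield crd Q) p) I' *
                 wirtb (\<lambda>q. Z q I) (crd Q (swapidx I')) p)"
          by (intro sum.cong refl) (simp add: wirt_LftS[OF p j])
        show ?thesis using cm unfolding s1 s2 by (simp add: algebra_simps)
      qed
      subgoal for j
        using delta_lemma[OF P_range, of "Y p" "cA j p" "cAb j p" "cG j p" "\<lambda>Q I'. wirt (\<lambda>q. Z q I) (crd Q I') p"]
        by simp
      done
  qed
  done
qed

end
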